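(* Let $\mathbb F$ be a field of characteristic $0$ and $A=\mathbb F[x,y,u,v]/\langle(1-x^2)(1-y^2)-(u^2+v^2)\rangle$. Let $$N=\begin{pmatrix}-u&v&1-x^2&0\\-v&-u&0&1-x^2\\1-y^2&0&-u&-v\\0&1-y^2&v&-u\end{pmatrix},\qquad M=\begin{pmatrix}u&v&1-x^2&0\\-v&u&0&1-x^2\\1-y^2&0&u&-v\\0&1-y^2&v&u\end{pmatrix},$$ viewed as $A$-linear maps $A^4\to A^4$. Then the kernel of $N$ equals the $A$-submodule of $A^4$ generated by the columns of $M$. *)

theory Defs
  imports "HOL-Computational_Algebra.Polynomial"
begin

text \<open>The polynomial ring F[x,y,u,v], realised as iterated univariate polynomials
  F[x][y][u][v]: the innermost variable is x, then y, then u, the outermost is v.\<close>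
type_synonym 'a mpoly4 = "'a poly poly poly poly"

definition X :: "'a::field_char_0 mpoly4" where "X = [:[:[:monom 1 1:]:]:]"
definition Y :: "'a::field_char_0 mpoly4" where "Y = [:[:monom 1 1:]:]"
definition U :: "'a::field_char_0 mpoly4" where "U = [:monom 1 1:]"
definition V :: "'a::field_char_0 mpoly4" where "V = monom 1 1"

definition frel :: "'a::field_char_0 mpoly4" where
  "frel = (1 - X^2) * (1 - Y^2) - (U^2 + V^2)"

definition Nmat :: "nat \<Rightarrow> nat \<Rightarrow> 'a::field_char_0 mpoly4" where
  "Nmat i j = [[-U, V, 1 - X^2, 0],
               [-V, -U, 0, 1 - X^2],
               [1 - Y^2, 0, -U, -V],
               [0, 1 - Y^2, V, -U]] ! i ! j"

definition Mmat :: "nat \<Rightarrow> nat \<Rightarrow> 'a::field_char_0 mpoly4" where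
  "Mmat i j = [[U, V, 1 - X^2, 0],
               [-V, U, 0, 1 - X^2],
               [1 - Y^2, 0, U, -V],
               [0, 1 - Y^2, V, U]] ! i ! j"

text \<open>Elements of A^4 are represented by vectors w (components w 0..w 3) over F[x,y,u,v];
  two representatives are equal in A^4 iff componentwise congruent modulo frel.\<close>

definition in_ker_N :: "(nat \<Rightarrow> 'a::field_char_0 mpoly4) \<Rightarrow> bool" where
  "in_ker_N w \<longleftrightarrow> (\<forall>i<4. frel dvd (\<Sum>j<4. Nmat i j * w j))"

definition in_col_span_M :: "(nat \<Rightarrow> 'a::field_char_0 mpoly4) \<Rightarrow> bool" where
  "in_col_span_M w \<longleftrightarrow>
     (\<exists>c :: nat \<Rightarrow> 'a mpoly4. \<forall>i<4. frel dvd (w i - (\<Sum>j<4. Mmat i j * c j)))"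

end

theory Submission
  imports Defs
begin

lemma sum4: "(\<Sum>j<(4::nat). f j) = f 0 + f 1 + f 2 + f 3"
  by (simp add: eval_nat_numeral add.assoc)

lemma all4: "(\<forall>i<(4::nat). P i) \<longleftrightarrow> P 0 \<and> P 1 \<and> P 2 \<and> P 3"
  by (auto simp: eval_nat_numeral less_Suc_eq)

lemma frel_nz: "(frel :: 'a::field_char_0 mpoly4) \<noteq> 0"
proof
  assume h: "(frel :: 'a mpoly4) = 0"
  have "coeff (frel :: 'a mpoly4) 2 = -1"
    unfolding frel_def X_def Y_def U_def V_def
    by (simp add: coeff_mult power2_eq_square monom_0 numeral_2_eq_2 coeff_monom_mult
          mult_monom)
  with h show False by simp
qed

theorem mainTheorem19:
  fixes w :: "nat \<Rightarrow> 'a::field_char_0 mpoly4"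
  shows "in_ker_N w \<longleftrightarrow> in_col_span_M w"
proof
  assume "in_ker_N w"
  then have "\<forall>i<4. \<exists>z. (\<Sum>j<4. Nmat i j * w j) = frel * z"
    unfolding in_ker_N_def dvd_def by blast
  then obtain z where z: "\<And>i. i<4 \<Longrightarrow> (\<Sum>j<4. Nmat i j * w j) = frel * z i"
    by metis
  have e0: "-U * w 0 + V * w 1 + (1 - X^2) * w 2 = frel * z 0" using z[of 0]
    by (simp add: sum4 Nmat_def)
  have e1: "-V * w 0 - U * w 1 + (1 - X^2) * w 3 = frel * z 1" using z[of 1]
    by (simp add: sum4 Nmat_def)
  have e2: "(1 - Y^2) * w 0 - U * w 2 - V * w 3 = frel * z 2" using z[of 2]
    by (simp add: sum4 Nmat_def)
  have e3: "(1 - Y^2) * w 1 + V * w 2 - U * w 3 = frel * z 3" using z[of 3]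
    by (simp add: sum4 Nmat_def)
  have "\<forall>i<4. w i - (\<Sum>j<4. Mmat i j * z j) = 0"
    unfolding all4
  proof (intro conjI)
    have "frel * (w 0 - (\<Sum>j<4. Mmat 0 j * z j)) = frel * w 0 - (U * (frel * z 0) + V * (frel * z 1) + (1 - X^2) * (frel * z 2))"
      by (simp add: sum4 Mmat_def algebra_simps)
    also have "\<dots> = 0" unfolding e0[symmetric] e1[symmetric] e2[symmetric]
      by (simp add: frel_def algebra_simps power2_eq_square)
    finally show "w 0 - (\<Sum>j<4. Mmat 0 j * z j) = 0" using frel_nz by auto
  next
    have "frel * (w 1 - (\<Sum>j<4. Mmat 1 j * z j)) = frel * w 1 - (-V * (frel * z 0) + U * (frel * z 1) + (1 - X^2) * (frel * z 3))"
      by (simp add: sum4 Mmat_def algebra_simps)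
    also have "\<dots> = 0" unfolding e0[symmetric] e1[symmetric] e3[symmetric]
      by (simp add: frel_def algebra_simps power2_eq_square)
    finally show "w 1 - (\<Sum>j<4. Mmat 1 j * z j) = 0" using frel_nz by auto
  next
    have "frel * (w 2 - (\<Sum>j<4. Mmat 2 j * z j)) = frel * w 2 - ((1 - Y^2) * (frel * z 0) + U * (frel * z 2) - V * (frel * z 3))"
      by (simp add: sum4 Mmat_def algebra_simps)
    also have "\<dots> = 0" unfolding e0[symmetric] e2[symmetric] e3[symmetric]
      by (simp add: frel_def algebra_simps power2_eq_square)
    finally show "w 2 - (\<Sum>j<4. Mmat 2 j * z j) = 0" using frel_nz by auto
  next
    have "frel * (w 3 - (\<Sum>j<4. Mmat 3 j * z j)) = frel * w 3 - ((1 - Y^2) * (frel * z 1) + V * (frel * z 2) + U * (frel * z 3))"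
      by (simp add: sum4 Mmat_def algebra_simps)
    also have "\<dots> = 0" unfolding e1[symmetric] e2[symmetric] e3[symmetric]
      by (simp add: frel_def algebra_simps power2_eq_square)
    finally show "w 3 - (\<Sum>j<4. Mmat 3 j * z j) = 0" using frel_nz by auto
  qed
  then show "in_col_span_M w" unfolding in_col_span_M_def by (metis dvd_0_right)
next
  assume "in_col_span_M w"
  then obtain c where c: "\<forall>i<4. frel dvd (w i - (\<Sum>j<4. Mmat i j * c j))"
    unfolding in_col_span_M_def by blast
  then have "\<forall>i<4. \<exists>d. w i - (\<Sum>j<4. Mmat i j * c j) = frel * d"
    unfolding dvd_def by blast
  then obtain d where d: "\<And>i. i<4 \<Longrightarrow> w i - (\<Sum>j<4. Mmat i j * c j) = frel * d i"
    by metis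
  have w0: "w 0 = U * c 0 + V * c 1 + (1 - X^2) * c 2 + frel * d 0"
    using d[of 0] by (simp add: sum4 Mmat_def algebra_simps)
  have w1: "w 1 = -V * c 0 + U * c 1 + (1 - X^2) * c 3 + frel * d 1"
    using d[of 1] by (simp add: sum4 Mmat_def algebra_simps)
  have w2: "w 2 = (1 - Y^2) * c 0 + U * c 2 - V * c 3 + frel * d 2"
    using d[of 2] by (simp add: sum4 Mmat_def algebra_simps)
  have w3: "w 3 = (1 - Y^2) * c 1 + V * c 2 + U * c 3 + frel * d 3"
    using d[of 3] by (simp add: sum4 Mmat_def algebra_simps)
  have "-U * w 0 + V * w 1 + (1 - X^2) * w 2 = frel * (c 0 + (-U * d 0 + V * d 1 + (1 - X^2) * d 2))"
    unfolding w0 w1 w2 w3 by (simp add: frel_def algebra_simps power2_eq_square)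
  moreover have "-V * w 0 - U * w 1 + (1 - X^2) * w 3 = frel * (c 1 + (-V * d 0 - U * d 1 + (1 - X^2) * d 3))"
    unfolding w0 w1 w2 w3 by (simp add: frel_def algebra_simps power2_eq_square)
  moreover have "(1 - Y^2) * w 0 - U * w 2 - V * w 3 = frel * (c 2 + ((1 - Y^2) * d 0 - U * d 2 - V * d 3))"
    unfolding w0 w1 w2 w3 by (simp add: frel_def algebra_simps power2_eq_square)
  moreover have "(1 - Y^2) * w 1 + V * w 2 - U * w 3 = frel * (c 3 + ((1 - Y^2) * d 1 + V * d 2 - U * d 3))"
    unfolding w0 w1 w2 w3 by (simp add: frel_def algebra_simps power2_eq_square)
  ultimately show "in_ker_N w" unfolding in_ker_N_def all4 sum4
    by (simp add: Nmat_def)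
qed

end
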